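(* Let $X$ be a hyperbolic approximation with parameter $r$ of a metric space $Z$, and let $v_1,v_2$ be any two vertices of $X$. If $w$ is a branch point of $\{v_1,v_2\}$, then \[\frac{r^2}{4}\,\operatorname{diam}(B(w))\le\operatorname{diam}(B(v_1)\cup B(v_2)),\] i.e. $\frac{r^2}{4}\le\frac{\operatorname{diam}(B(v_1)\cup B(v_2))}{\operatorname{diam}(B(w))}$ whenever $\operatorname{diam}(B(w))>0$.
   Context: Hyperbolic approximation: let $(Z,d)$ be a metric space and fix a parameter $r$ with $0<r\le1/6$. For every $k\in\mathbb{Z}$ choose a maximal $r^k$-separated set $V_k\subset Z$ (distinct points at distance $\ge r^k$, maximal with this property). For $v\in V_k$ let $B(v)$ be the ball in $Z$ of radius $2r^k$ centred at $v$, $\bar B(v)$ the closed ball. The vertex set $V$ consists, for each $k$, of the balls $B(v)$, $v\in V_k$ (equal balls from the same level give the same vertex; equal balls at different levels are different vertices); a vertex from level $k$ has level $l(v)=k$. Two vertices are joined by an edge iff they are on the same level and their closed balls intersect (horizontal edge), or they are on neighbouring levels $k,k+1$ and the ball of the level-$(k+1)$ vertex is contained in the ball of the level-$k$ vertex (radial edge). $X$ carries the path metric with all edges of length $1$. A radial geodesic is an edge path all of whose edges are radial and along which the level function is monotone. For $V'\subset V$, a vertex $u$ is a cone point of $V'$ if $l(u)\le\inf_{v\in V'}l(v)$ and every $v\in V'$ is connected to $u$ by a radial geodesic; a branch point of $V'$ is a cone point of maximal level. *)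

theory Defs
  imports "HOL-Analysis.Analysis"
begin

text \<open>The metric space Z is the whole carrier of a type of class metric_space.
  A vertex of the hyperbolic approximation is a pair (k, B) of its level k and
  its ball B = ball v (2 r^k) with v in V k (so equal balls on the same level
  give the same vertex, equal balls on different levels different vertices).\<close>

definition separated_set :: "real \<Rightarrow> 'a::metric_space set \<Rightarrow> bool" where
  "separated_set e S \<longleftrightarrow> (\<forall>x\<in>S. \<forall>y\<in>S. x \<noteq> y \<longrightarrow> e \<le> dist x y)"

definition maximal_separated_set :: "real \<Rightarrow> 'a::metric_space set \<Rightarrow> bool" where
  "maximal_separated_set e S \<longleftrightarrow>
     separated_set e S \<and> (\<forall>T. S \<subseteq> T \<and> separated_set e T \<longrightarrow> T = S)"

definition hyp_approx_data :: "real \<Rightarrow> (int \<Rightarrow> 'a::metric_space set) \<Rightarrow> bool" where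
  "hyp_approx_data r V \<longleftrightarrow> 0 < r \<and> r \<le> 1/6 \<and> (\<forall>k. maximal_separated_set (r powi k) (V k))"

definition hyp_vertices :: "real \<Rightarrow> (int \<Rightarrow> 'a::metric_space set) \<Rightarrow> (int \<times> 'a set) set" where
  "hyp_vertices r V = {(k, ball v (2 * r powi k)) | k v. v \<in> V k}"

text \<open>Radial edges (horizontal edges are never used by radial geodesics).\<close>
definition radial_edge :: "real \<Rightarrow> (int \<Rightarrow> 'a::metric_space set) \<Rightarrow> int \<times> 'a set \<Rightarrow> int \<times> 'a set \<Rightarrow> bool" where
  "radial_edge r V a b \<longleftrightarrow> a \<in> hyp_vertices r V \<and> b \<in> hyp_vertices r V \<and>
     ((fst b = fst a + 1 \<and> snd b \<subseteq> snd a) \<or> (fst a = fst b + 1 \<and> snd a \<subseteq> snd b))"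

definition radial_geodesic :: "real \<Rightarrow> (int \<Rightarrow> 'a::metric_space set) \<Rightarrow> (int \<times> 'a set) list \<Rightarrow> bool" where
  "radial_geodesic r V p \<longleftrightarrow> p \<noteq> [] \<and> set p \<subseteq> hyp_vertices r V \<and>
     (\<forall>i. Suc i < length p \<longrightarrow> radial_edge r V (p ! i) (p ! Suc i)) \<and>
     ((\<forall>i j. i \<le> j \<and> j < length p \<longrightarrow> fst (p ! i) \<le> fst (p ! j)) \<or>
      (\<forall>i j. i \<le> j \<and> j < length p \<longrightarrow> fst (p ! j) \<le> fst (p ! i)))"

definition radially_connected :: "real \<Rightarrow> (int \<Rightarrow> 'a::metric_space set) \<Rightarrow> int \<times> 'a set \<Rightarrow> int \<times> 'a set \<Rightarrow> bool" where
  "radially_connected r V u v \<longleftrightarrow> (\<exists>p. radial_geodesic r V p \<and> hd p = v \<and> last p = u)"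

definition cone_point :: "real \<Rightarrow> (int \<Rightarrow> 'a::metric_space set) \<Rightarrow> (int \<times> 'a set) set \<Rightarrow> int \<times> 'a set \<Rightarrow> bool" where
  "cone_point r V W u \<longleftrightarrow> u \<in> hyp_vertices r V \<and> (\<forall>v\<in>W. fst u \<le> fst v) \<and>
     (\<forall>v\<in>W. radially_connected r V u v)"

definition branch_point :: "real \<Rightarrow> (int \<Rightarrow> 'a::metric_space set) \<Rightarrow> (int \<times> 'a set) set \<Rightarrow> int \<times> 'a set \<Rightarrow> bool" where
  "branch_point r V W u \<longleftrightarrow> cone_point r V W u \<and> (\<forall>u'. cone_point r V W u' \<longrightarrow> fst u' \<le> fst u)"

end

theory Submission
  imports Defs
begin

lemma near_point:
  assumes "maximal_separated_set e S" "0 < e"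
  shows "\<exists>y\<in>S. dist x y < e"
proof (rule ccontr)
  assume "\<not> ?thesis"
  hence far: "\<forall>y\<in>S. e \<le> dist x y" by (auto simp: not_less)
  have "separated_set e (insert x S)"
    using assms(1) far unfolding maximal_separated_set_def separated_set_def
    by (auto simp: dist_commute)
  hence "insert x S = S" using assms(1) unfolding maximal_separated_set_def by blast
  hence "x \<in> S" by blast
  with far assms(2) show False by force
qed

lemma diam_ball_le:
  fixes c :: "'a::metric_space"
  assumes "0 < \<rho>"
  shows "diameter (ball c \<rho>) \<le> 2 * \<rho>"
proof (rule ccontr)
  assume "\<not> ?thesis"
  hence "2 * \<rho> < diameter (ball c \<rho>)" by simp
  then obtain x y where "x \<in> ball c \<rho>" "y \<in> ball c \<rho>" "2 * \<rho> < dist x y"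
    using diameter_lower_bounded[of "ball c \<rho>" "2*\<rho>"] assms by auto
  moreover have "dist x y \<le> dist c x + dist c y" by (metis dist_commute dist_triangle)
  ultimately show False by auto
qed

lemma chain:
  assumes H: "hyp_approx_data r V"
    and x: "x \<in> V m" and c: "c \<in> V n" and nm: "n \<le> m"
    and eq: "n = m \<Longrightarrow> c = x"
    and dc: "dist x c \<le> 2 * r powi n - 3 * r powi (n + 1)"
  shows "radially_connected r V (n, ball c (2 * r powi n)) (m, ball x (2 * r powi m))"
proof -
  have r0: "0 < r" and r6: "r \<le> 1/6" and ms: "\<And>k. maximal_separated_set (r powi k) (V k)"
    using H unfolding hyp_approx_data_def by auto
  have rpos: "\<And>k. 0 < r powi k" using r0 by simp
  have rsuc: "\<And>k. r powi (k + 1) = r powi k * r" using r0 by (simp add: power_int_add_1)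
  define d where "d = nat (m - n)"
  have md: "m - int d = n" using nm d_def by simp
  define Y where "Y j = (if j = 0 then x else if j = d then c else
      SOME y. y \<in> V (m - int j) \<and> dist x y < r powi (m - int j))" for j
  have Yd: "Y d = c" using eq md by (simp add: Y_def)
  have Ymid: "Y j \<in> V (m - int j) \<and> dist x (Y j) < r powi (m - int j)" if "0 < j" "j < d" for j
  proof -
    obtain y where "y \<in> V (m - int j)" "dist x y < r powi (m - int j)"
      using near_point[OF ms rpos] by blast
    hence "(SOME y. y \<in> V (m - int j) \<and> dist x y < r powi (m - int j)) \<in> V (m - int j) \<and> dist x (SOME y. y \<in> V (m - int j) \<and> dist x y < r powi (m - int j)) < r powi (m - int j)"
      by (intro someI_ex[where P = "\<lambda>y. y \<in> V (m - int j) \<and> dist x y < r powi (m - int j)"]) blast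
    thus ?thesis using that unfolding Y_def by auto
  qed
  have Ylt: "Y j \<in> V (m - int j) \<and> dist x (Y j) < r powi (m - int j)" if "j < d" for j
  proof (cases "j = 0")
    case True thus ?thesis using x rpos by (simp add: Y_def)
  next
    case False thus ?thesis using Ymid that by simp
  qed
  have YV: "Y j \<in> V (m - int j)" if "j \<le> d" for j
    using Ylt[of j] that Yd c md by (cases "j = d") auto
  define p where "p = map (\<lambda>j. (m - int j, ball (Y j) (2 * r powi (m - int j)))) [0..<Suc d]"
  have lenp: "length p = Suc d" by (simp add: p_def)
  have pnth: "p ! j = (m - int j, ball (Y j) (2 * r powi (m - int j)))" if "j < Suc d" for j
    using that unfolding p_def by (simp del: upt_Suc)
  have pV: "set p \<subseteq> hyp_vertices r V"
  proof
    fix a assume "a \<in> set p"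
    then obtain j where j: "j < Suc d" "a = p ! j" by (metis in_set_conv_nth lenp)
    thus "a \<in> hyp_vertices r V" using pnth[OF j(1)] YV[of j] unfolding hyp_vertices_def by auto
  qed
  have edge: "radial_edge r V (p ! j) (p ! Suc j)" if "Suc j < length p" for j
  proof -
    have j: "j < d" using that lenp by simp
    define \<rho> where "\<rho> = r powi (m - int j - 1)"
    have \<rho>0: "0 < \<rho>" using rpos \<rho>_def by simp
    have \<rho>r: "r powi (m - int j) = \<rho> * r" using rsuc[of "m - int j - 1"] \<rho>_def by simp
    have lev: "m - int (Suc j) = m - int j - 1" by simp
    have bnd: "dist x (Y (Suc j)) \<le> 2 * \<rho> - 3 * (\<rho> * r)"
    proof (cases "Suc j = d")
      case True
      hence "n = m - int j - 1" using md by simp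
      hence "r powi n = \<rho>" "r powi (n+1) = \<rho> * r" using \<rho>_def \<rho>r by auto
      thus ?thesis using dc True Yd by simp
    next
      case False
      hence "dist x (Y (Suc j)) < r powi (m - int (Suc j))" using Ylt[of "Suc j"] j by simp
      hence "dist x (Y (Suc j)) < \<rho>" unfolding \<rho>_def lev .
      moreover have "3 * (\<rho> * r) \<le> \<rho> / 2" using r6 \<rho>0 by (simp add: mult_left_mono)
      ultimately show ?thesis using \<rho>0 by linarith
    qed
    have dj: "dist x (Y j) < \<rho> * r" using Ylt[OF j] \<rho>r by simp
    have sub: "ball (Y j) (2 * (\<rho> * r)) \<subseteq> ball (Y (Suc j)) (2 * \<rho>)"
    proof
      fix z assume "z \<in> ball (Y j) (2 * (\<rho> * r))"
      hence "dist (Y j) z < 2 * (\<rho> * r)" by simp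
      moreover have "dist (Y (Suc j)) z \<le> dist (Y (Suc j)) x + dist x z"
        by (rule dist_triangle)
      moreover have "dist x z \<le> dist x (Y j) + dist (Y j) z"
        by (rule dist_triangle)
      moreover have "dist (Y (Suc j)) x = dist x (Y (Suc j))" by (rule dist_commute)
      moreover have "3 * (\<rho> * r) \<ge> 0" using \<rho>0 r0 by simp
      ultimately have "dist (Y (Suc j)) z < 2 * \<rho>" using bnd dj by linarith
      thus "z \<in> ball (Y (Suc j)) (2 * \<rho>)" by simp
    qed
    have a: "p ! j \<in> hyp_vertices r V" using pV that nth_mem[of j p] nth_mem[of "Suc j" p] by auto
    have b: "p ! Suc j \<in> hyp_vertices r V" using pV that nth_mem[of j p] nth_mem[of "Suc j" p] by auto
    have pj: "p ! j = (m - int j, ball (Y j) (2 * (\<rho> * r)))" using pnth[of j] j \<rho>r by simp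
    have psj: "p ! Suc j = (m - int j - 1, ball (Y (Suc j)) (2 * \<rho>))"
      using pnth[of "Suc j"] j unfolding lev \<rho>_def by simp
    show ?thesis unfolding radial_edge_def using a b sub pj psj by simp
  qed
  have geo: "radial_geodesic r V p"
    unfolding radial_geodesic_def using pV edge lenp pnth by auto
  have "p \<noteq> []" using lenp by auto
  hence "hd p = p ! 0" by (rule hd_conv_nth)
  hence "hd p = (m, ball x (2 * r powi m))" using pnth[of 0] by (simp add: Y_def)
  moreover have "last p = (n, ball c (2 * r powi n))"
  proof -
    have "last p = p ! (length p - 1)" using \<open>p \<noteq> []\<close> by (rule last_conv_nth)
    thus ?thesis using pnth[of d] lenp md Yd by simp
  qed
  ultimately show ?thesis unfolding radially_connected_def using geo by blast
qed

lemma chain2: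
  assumes H: "hyp_approx_data r V"
    and x: "x \<in> V m" and c: "c \<in> V n" and nm: "n \<le> m"
    and eq: "n = m \<Longrightarrow> c = x"
    and dc: "dist x c < 3/2 * r powi n"
  shows "radially_connected r V (n, ball c (2 * r powi n)) (m, ball x (2 * r powi m))"
proof (rule chain[OF H x c nm eq])
  have r0: "0 < r" and r6: "r \<le> 1/6" using H unfolding hyp_approx_data_def by auto
  have "r powi (n + 1) = r powi n * r" using r0 by (simp add: power_int_add_1)
  moreover have "r powi n * r \<le> r powi n * (1/6)" using r6 r0 by (intro mult_left_mono) auto
  ultimately show "dist x c \<le> 2 * r powi n - 3 * r powi (n + 1)" using dc by simp
qed

lemma same_level:
  assumes "radially_connected r V u v" "fst u = fst v"
  shows "u = v"
proof -
  obtain p where p: "radial_geodesic r V p" "hd p = v" "last p = u"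
    using assms(1) unfolding radially_connected_def by blast
  have ne: "p \<noteq> []" using p(1) unfolding radial_geodesic_def by simp
  have hd0: "hd p = p ! 0" using ne by (rule hd_conv_nth)
  have lst: "last p = p ! (length p - 1)" using ne by (rule last_conv_nth)
  show ?thesis
  proof (cases "length p = 1")
    case True thus ?thesis using p hd0 lst by simp
  next
    case False
    hence l2: "Suc 0 < length p" using ne by (cases p) auto
    have e: "radial_edge r V (p ! 0) (p ! Suc 0)" using p(1) l2 unfolding radial_geodesic_def by blast
    hence e': "fst (p ! Suc 0) = fst (p ! 0) + 1 \<or> fst (p ! 0) = fst (p ! Suc 0) + 1"
      unfolding radial_edge_def by auto
    have f: "fst (p ! 0) = fst (p ! (length p - 1))" using assms(2) p hd0 lst by simp
    have mono: "(\<forall>i j. i \<le> j \<and> j < length p \<longrightarrow> fst (p ! i) \<le> fst (p ! j)) \<or>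
      (\<forall>i j. i \<le> j \<and> j < length p \<longrightarrow> fst (p ! j) \<le> fst (p ! i))"
      using p(1) unfolding radial_geodesic_def by blast
    have "Suc 0 \<le> length p - 1" "length p - 1 < length p" using l2 by auto
    hence "fst (p ! Suc 0) = fst (p ! 0)"
    proof -
      assume a: "Suc 0 \<le> length p - 1" "length p - 1 < length p"
      from mono show ?thesis
      proof
        assume i: "\<forall>i j. i \<le> j \<and> j < length p \<longrightarrow> fst (p ! i) \<le> fst (p ! j)"
        have "fst (p ! 0) \<le> fst (p ! Suc 0)" using i l2 by blast
        moreover have "fst (p ! Suc 0) \<le> fst (p ! (length p - 1))" using i a by blast
        ultimately show ?thesis using f by simp
      next
        assume i: "\<forall>i j. i \<le> j \<and> j < length p \<longrightarrow> fst (p ! j) \<le> fst (p ! i)"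
        have "fst (p ! Suc 0) \<le> fst (p ! 0)" using i l2 by blast
        moreover have "fst (p ! (length p - 1)) \<le> fst (p ! Suc 0)" using i a by blast
        ultimately show ?thesis using f by simp
      qed
    qed
    with e' show ?thesis by simp
  qed
qed

lemma cone_exists:
  assumes H: "hyp_approx_data r V"
    and x1: "x1 \<in> V m1" and x2: "x2 \<in> V m2" and n1: "n \<le> m1" and n2: "n \<le> m2"
    and d: "dist x1 x2 < r powi n / 2"
  shows "\<exists>u. cone_point r V {(m1, ball x1 (2 * r powi m1)), (m2, ball x2 (2 * r powi m2))} u
           \<and> fst u = n"
proof -
  have r0: "0 < r" and ms: "\<And>k. maximal_separated_set (r powi k) (V k)"
    using H unfolding hyp_approx_data_def by auto
  have rp: "0 < r powi n" using r0 by simp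
  have sep: "x1 = x2" if "m1 = n" "m2 = n"
  proof (rule ccontr)
    assume "x1 \<noteq> x2"
    hence "r powi n \<le> dist x1 x2" using ms[of n] x1 x2 that
      unfolding maximal_separated_set_def separated_set_def by auto
    thus False using d rp by simp
  qed
  have rr: "0 < 3/2 * r powi n" using rp by simp
  have "\<exists>c. c \<in> V n \<and> dist x1 c < 3/2 * r powi n \<and> dist x2 c < 3/2 * r powi n \<and>
    (n = m1 \<longrightarrow> c = x1) \<and> (n = m2 \<longrightarrow> c = x2)"
  proof (cases "m1 = n")
    case True
    have "x1 \<in> V n" using x1 True by simp
    moreover have "dist x2 x1 < 3/2 * r powi n" using d rp by (simp add: dist_commute)
    moreover have "n = m2 \<longrightarrow> x1 = x2" using sep True by simp
    ultimately show ?thesis using rr by (intro exI[of _ x1]) simp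
  next
    case F1: False
    show ?thesis
    proof (cases "m2 = n")
      case True
      have "x2 \<in> V n" using x2 True by simp
      moreover have "dist x1 x2 < 3/2 * r powi n" using d rp by simp
      ultimately show ?thesis using rr F1 by (intro exI[of _ x2]) simp
    next
      case False
      obtain y where y: "y \<in> V n" "dist x1 y < r powi n" using near_point[OF ms rp] by blast
      have "dist x2 y \<le> dist x2 x1 + dist x1 y" by (rule dist_triangle)
      hence "dist x2 y < 3/2 * r powi n" using y d by (simp add: dist_commute)
      moreover have "dist x1 y < 3/2 * r powi n" using y(2) rp by simp
      ultimately show ?thesis using y(1) F1 False by (intro exI[of _ y]) simp
    qed
  qed
  then obtain c where c: "c \<in> V n" "dist x1 c < 3/2 * r powi n" "dist x2 c < 3/2 * r powi n"
    "n = m1 \<Longrightarrow> c = x1" "n = m2 \<Longrightarrow> c = x2" by blast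
  have hv: "(n, ball c (2 * r powi n)) \<in> hyp_vertices r V"
    unfolding hyp_vertices_def using c(1) by blast
  have rc1: "radially_connected r V (n, ball c (2 * r powi n)) (m1, ball x1 (2 * r powi m1))"
    by (rule chain2[OF H x1 c(1) n1]) (use c in \<open>auto simp: dist_commute\<close>)
  have rc2: "radially_connected r V (n, ball c (2 * r powi n)) (m2, ball x2 (2 * r powi m2))"
    by (rule chain2[OF H x2 c(1) n2]) (use c in \<open>auto simp: dist_commute\<close>)
  have "cone_point r V {(m1, ball x1 (2 * r powi m1)), (m2, ball x2 (2 * r powi m2))}
          (n, ball c (2 * r powi n))"
    unfolding cone_point_def using hv rc1 rc2 n1 n2 by simp
  thus ?thesis by (intro exI[of _ "(n, ball c (2 * r powi n))"]) simp
qed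

theorem lemma3p10:
  fixes r :: real and V :: "int \<Rightarrow> 'a::metric_space set"
    and v1 v2 w :: "int \<times> 'a set"
  assumes "hyp_approx_data r V"
    and "v1 \<in> hyp_vertices r V" and "v2 \<in> hyp_vertices r V"
    and "branch_point r V {v1, v2} w"
  shows "r\<^sup>2 / 4 * diameter (snd w) \<le> diameter (snd v1 \<union> snd v2)"
proof -
  note H = assms(1)
  have r0: "0 < r" and r6: "r \<le> 1/6" using H unfolding hyp_approx_data_def by auto
  have cw: "cone_point r V {v1, v2} w" and mx: "\<And>u'. cone_point r V {v1, v2} u' \<Longrightarrow> fst u' \<le> fst w"
    using assms(4) unfolding branch_point_def by auto
  have "w \<in> hyp_vertices r V" using cw unfolding cone_point_def by blast
  then obtain k cw where w: "w = (k, ball cw (2 * r powi k))" "cw \<in> V k"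
    unfolding hyp_vertices_def by blast
  obtain m1 x1 where v1: "v1 = (m1, ball x1 (2 * r powi m1))" "x1 \<in> V m1"
    using assms(2) unfolding hyp_vertices_def by blast
  obtain m2 x2 where v2: "v2 = (m2, ball x2 (2 * r powi m2))" "x2 \<in> V m2"
    using assms(3) unfolding hyp_vertices_def by blast
  have km: "k \<le> m1" "k \<le> m2" using cw w v1 v2 unfolding cone_point_def by auto
  have rc1: "radially_connected r V w v1" and rc2: "radially_connected r V w v2"
    using cw unfolding cone_point_def by auto
  have bd: "bounded (snd v1 \<union> snd v2)" using v1 v2 by simp
  have D0: "0 \<le> diameter (snd v1 \<union> snd v2)" using bd by (rule diameter_ge_0)
  have "r\<^sup>2 \<le> 1" using r0 r6 by (intro power_le_one) auto
  hence rr: "r\<^sup>2 / 4 \<le> 1" by simp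
  have rr0: "0 \<le> r\<^sup>2 / 4" by simp
  show ?thesis
  proof (cases "k = m1 \<or> k = m2")
    case True
    hence "w = v1 \<or> w = v2" using same_level[OF rc1] same_level[OF rc2] w v1 v2 by auto
    hence "snd w \<subseteq> snd v1 \<union> snd v2" by auto
    hence dw: "diameter (snd w) \<le> diameter (snd v1 \<union> snd v2)" using bd by (rule diameter_subset)
    have "0 \<le> diameter (snd w)" using w by (simp add: diameter_ge_0)
    hence "r\<^sup>2 / 4 * diameter (snd w) \<le> 1 * diameter (snd w)" using rr by (intro mult_right_mono)
    thus ?thesis using dw by simp
  next
    case False
    hence k1: "k + 1 \<le> m1" "k + 1 \<le> m2" using km by auto
    have dge: "r powi (k + 1) / 2 \<le> dist x1 x2"
    proof (rule ccontr)
      assume "\<not> ?thesis"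
      then obtain u where u: "cone_point r V {v1, v2} u" "fst u = k + 1"
        using cone_exists[OF H v1(2) v2(2) k1] v1 v2 by auto
      from mx[OF u(1)] u(2) w show False by simp
    qed
    have "x1 \<in> snd v1 \<union> snd v2" "x2 \<in> snd v1 \<union> snd v2" using v1 v2 r0 by auto
    hence dD: "dist x1 x2 \<le> diameter (snd v1 \<union> snd v2)" using bd diameter_bounded_bound by blast
    have dw: "diameter (snd w) \<le> 2 * (2 * r powi k)" using w r0 diam_ball_le[of "2 * r powi k" cw] by simp
    have rk: "r powi (k + 1) = r powi k * r" using r0 by (simp add: power_int_add_1)
    have rkp: "0 < r powi k" using r0 by simp
    have "r\<^sup>2 / 4 * diameter (snd w) \<le> r\<^sup>2 / 4 * (2 * (2 * r powi k))"
      using dw rr0 by (rule mult_left_mono)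
    also have "\<dots> = (r powi k * r) * r" by (simp add: power2_eq_square)
    also have "\<dots> \<le> (r powi k * r) * (1/2)" using r6 rkp r0 by (intro mult_left_mono) auto
    also have "\<dots> = r powi (k + 1) / 2" using rk by simp
    finally show ?thesis using dge dD by linarith
  qed
qed

end
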